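(* Let $(\mathcal W,\rhd)$ be a well-founded frame (over a fixed syntactical $\lambda$-algebra $(\mathcal V,\cdot,[\![-]\!])$). Then $\mathcal I[\bullet(A\to B)]^\eta_p=\mathcal I[\bullet A\to\bullet B]^\eta_p$ holds for all type expressions $A,B$, all hereditary type environments $\eta$ and all $p\in\mathcal W$ if and only if $\rhd$ is locally linear.
   Context: Type expressions: fix a countably infinite set of type variables $X,Y,Z,\dots$. Pseudo type expressions are generated by $A::=X\mid A\to A\mid \bullet A\mid \mu X.A$ ($\mu$ binds $X$; $\alpha$-convertible expressions are identified; $\to$ associates to the right; $\bullet$ binds tighter than $\to$, which binds tighter than $\mu$). $A[B/X]$ denotes capture-avoiding substitution. $\top$ abbreviates $\mu X.\bullet X$, and $\bullet^n A$ denotes $A$ prefixed by $n$ copies of $\bullet$. The tail $t(A)$ is defined by $t(X)=X$, $t(A\to B)=t(B)$, $t(\bullet A)=\bullet t(A)$, $t(\mu X.A)=\mu X.t(A)$; it always has the form $\bullet^{m_0}\mu X_1.\bullet^{m_1}\mu X_2.\cdots\mu X_n.\bullet^{m_n}Y$. $A$ is a $\top$-variant iff $Y=X_i$ for some $1\le i\le n$ with $X_i\notin\{X_{i+1},\dots,X_n\}$ and $m_i+\dots+m_n\ge 1$. $A$ is proper in $X$ iff: a variable $Y$ is proper in $X$ iff $Y\neq X$; $\bullet A$ is always proper in $X$; $A\to B$ is proper in $X$ iff both $A,B$ are proper in $X$ or $B$ is a $\top$-variant; for $Y\ne X$, $\mu Y.A$ is proper in $X$ iff $A$ is proper in $X$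 or $\mu Y.A$ is a $\top$-variant. Type expressions are the least set of pseudo type expressions containing all type variables, closed under $\to$ and $\bullet$, and containing $\mu X.A$ whenever it contains $A$ and $A$ is proper in $X$. Semantics: a syntactical $\lambda$-algebra $(\mathcal V,\cdot,[\![-]\!])$ consists of a nonempty set $\mathcal V$, a map $\cdot:\mathcal V\times\mathcal V\to\mathcal V$, and values $[\![M]\!]_\rho\in\mathcal V$ for untyped $\lambda$-terms $M$ and maps $\rho$ from individual variables to $\mathcal V$, such that $[\![x]\!]_\rho=\rho(x)$, $[\![MN]\!]_\rho=[\![M]\!]_\rho\cdot[\![N]\!]_\rho$, $[\![\lambda x.M]\!]_\rho\cdot v=[\![M]\!]_{\rho[v/x]}$, $[\![M]\!]_\rho$ depends only on $\rho$ restricted to free variables of $M$, and $M=_\beta N$ implies $[\![M]\!]_\rho=[\![N]\!]_\rho$. A well-founded frame is a pair $(\mathcal W,\rhd)$ with $\mathcal W$ nonempty and $\rhd$ a binary relation on $\mathcal W$ admitting no infinite chain $p_0\rhd p_1\rhd p_2\rhd\cdots$; $\trianglerighteq$ denotes the reflexive-transitive closure of $\rhd$. $\rhd$ is locally linear if whenever $p\rhd q$ there is $r$ with $p\trianglerighteq r\rhd q$ such that $r\rhd s$ implies $q\trianglerighteq s$ for all $s$. A $\lambda$A-frame is a well-founded frame whose $\rhd$ is locally linear. A type environment $\eta$ assigns a set $\eta(X)_p\subseteq\mathcal V$ to each type variable $X$ and world $p$; it is hereditary if $p\rhd q$ implies $\eta(X)_p\subseteq\eta(X)_q$. For hereditary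 $\eta$, $\mathcal I[A]^\eta_p\subseteq\mathcal V$ is defined (by well-founded induction on $p$ and the syntactic rank of $A$) by: $\mathcal I[A]^\eta_p=\mathcal V$ if $A$ is a $\top$-variant; otherwise $\mathcal I[X]^\eta_p=\eta(X)_p$; $\mathcal I[\bullet A]^\eta_p=\{u\mid u\in\mathcal I[A]^\eta_q\text{ for all }q\text{ with }p\rhd q\}$; $\mathcal I[A\to B]^\eta_p=\{u\mid \text{for all }q\text{ with }p\trianglerighteq q\text{ and all }v\in\mathcal I[A]^\eta_q,\ u\cdot v\in\mathcal I[B]^\eta_q\}$; $\mathcal I[\mu X.A]^\eta_p=\mathcal I[A[\mu X.A/X]]^\eta_p$. *)

theory Defs
  imports Main
begin

section \<open>Type expressions (de Bruijn representation, so alpha-equivalent expressions are identified)\<close>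

text \<open>TVar n is a type variable (a de Bruijn index; free variables are the indices that
  exceed the binding depth, and the countably many type variables X,Y,Z,... are the naturals);
  Mu A binds index 0 in A.\<close>

datatype ty = TVar nat | Arr ty ty | Later ty | Mu ty

fun lift_ty :: "nat \<Rightarrow> ty \<Rightarrow> ty" where
  "lift_ty k (TVar n) = (if n < k then TVar n else TVar (Suc n))"
| "lift_ty k (Arr a b) = Arr (lift_ty k a) (lift_ty k b)"
| "lift_ty k (Later a) = Later (lift_ty k a)"
| "lift_ty k (Mu a) = Mu (lift_ty (Suc k) a)"

text \<open>Capture-avoiding substitution: subst_ty A k S replaces index k by S (and lowers the
  larger free indices, since the binder of k disappears).\<close>
fun subst_ty :: "ty \<Rightarrow> nat \<Rightarrow> ty \<Rightarrow> ty" where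
  "subst_ty (TVar n) k s = (if n < k then TVar n else if n = k then s else TVar (n - 1))"
| "subst_ty (Arr a b) k s = Arr (subst_ty a k s) (subst_ty b k s)"
| "subst_ty (Later a) k s = Later (subst_ty a k s)"
| "subst_ty (Mu a) k s = Mu (subst_ty a (Suc k) (lift_ty 0 s))"

fun tail :: "ty \<Rightarrow> ty" where
  "tail (TVar n) = TVar n"
| "tail (Arr a b) = tail b"
| "tail (Later a) = Later (tail a)"
| "tail (Mu a) = Mu (tail a)"

text \<open>refers_to C k: the chain C (of Later/Mu ending in a variable) ends in the variable
  bound k binders outside C.  guarded_ref C k: additionally at least one Later occurs in C
  before that variable is reached.\<close>
fun refers_to :: "ty \<Rightarrow> nat \<Rightarrow> bool" where
  "refers_to (TVar n) k = (n = k)"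
| "refers_to (Arr a b) k = False"
| "refers_to (Later a) k = refers_to a k"
| "refers_to (Mu a) k = refers_to a (Suc k)"

fun guarded_ref :: "ty \<Rightarrow> nat \<Rightarrow> bool" where
  "guarded_ref (TVar n) k = False"
| "guarded_ref (Arr a b) k = False"
| "guarded_ref (Later a) k = refers_to a k"
| "guarded_ref (Mu a) k = guarded_ref a (Suc k)"

text \<open>A tail bullet^m0 mu X1. bullet^m1 ... mu Xn. bullet^mn Y is a top-variant tail iff
  Y is bound by some binder Xi (with no rebinding, automatic in de Bruijn form) and
  m_i + ... + m_n >= 1, i.e. some bullet lies between that binder and Y.\<close>
fun top_tail :: "ty \<Rightarrow> bool" where
  "top_tail (TVar n) = False"
| "top_tail (Arr a b) = False"
| "top_tail (Later a) = top_tail a"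
| "top_tail (Mu a) = (top_tail a \<or> guarded_ref a 0)"

definition top_variant :: "ty \<Rightarrow> bool" where
  "top_variant A = top_tail (tail A)"

fun proper :: "ty \<Rightarrow> nat \<Rightarrow> bool" where
  "proper (TVar n) x = (n \<noteq> x)"
| "proper (Later a) x = True"
| "proper (Arr a b) x = ((proper a x \<and> proper b x) \<or> top_variant b)"
| "proper (Mu a) x = (proper a (Suc x) \<or> top_variant (Mu a))"

inductive type_expr :: "ty \<Rightarrow> bool" where
  "type_expr (TVar n)"
| "type_expr a \<Longrightarrow> type_expr b \<Longrightarrow> type_expr (Arr a b)"
| "type_expr a \<Longrightarrow> type_expr (Later a)"
| "type_expr a \<Longrightarrow> proper a 0 \<Longrightarrow> type_expr (Mu a)"

datatype lterm = LVar nat | LApp lterm lterm | LAbs lterm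

fun lift_tm :: "nat \<Rightarrow> lterm \<Rightarrow> lterm" where
  "lift_tm k (LVar n) = (if n < k then LVar n else LVar (Suc n))"
| "lift_tm k (LApp s t) = LApp (lift_tm k s) (lift_tm k t)"
| "lift_tm k (LAbs s) = LAbs (lift_tm (Suc k) s)"

fun subst_tm :: "lterm \<Rightarrow> nat \<Rightarrow> lterm \<Rightarrow> lterm" where
  "subst_tm (LVar n) k u = (if n < k then LVar n else if n = k then u else LVar (n - 1))"
| "subst_tm (LApp s t) k u = LApp (subst_tm s k u) (subst_tm t k u)"
| "subst_tm (LAbs s) k u = LAbs (subst_tm s (Suc k) (lift_tm 0 u))"

inductive beta :: "lterm \<Rightarrow> lterm \<Rightarrow> bool" where
  "beta (LApp (LAbs s) t) (subst_tm s 0 t)"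
| "beta s s' \<Longrightarrow> beta (LApp s t) (LApp s' t)"
| "beta t t' \<Longrightarrow> beta (LApp s t) (LApp s t')"
| "beta s s' \<Longrightarrow> beta (LAbs s) (LAbs s')"

definition beta_eq :: "lterm \<Rightarrow> lterm \<Rightarrow> bool" where
  "beta_eq = equivclp beta"

fun lfv :: "lterm \<Rightarrow> nat set" where
  "lfv (LVar n) = {n}"
| "lfv (LApp s t) = lfv s \<union> lfv t"
| "lfv (LAbs s) = {n. Suc n \<in> lfv s}"

text \<open>Environment for the body of a binder: index 0 gets v, index n+1 gets rho n
  (this is rho[v/x] in de Bruijn form).\<close>
definition env_cons :: "'v \<Rightarrow> (nat \<Rightarrow> 'v) \<Rightarrow> nat \<Rightarrow> 'v" where
  "env_cons v \<rho> n = (if n = 0 then v else \<rho> (n - 1))"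

definition syn_lambda_algebra ::
  "('v \<Rightarrow> 'v \<Rightarrow> 'v) \<Rightarrow> (lterm \<Rightarrow> (nat \<Rightarrow> 'v) \<Rightarrow> 'v) \<Rightarrow> bool" where
  "syn_lambda_algebra app sem \<longleftrightarrow>
     (\<forall>x \<rho>. sem (LVar x) \<rho> = \<rho> x) \<and>
     (\<forall>M N \<rho>. sem (LApp M N) \<rho> = app (sem M \<rho>) (sem N \<rho>)) \<and>
     (\<forall>M \<rho> v. app (sem (LAbs M) \<rho>) v = sem M (env_cons v \<rho>)) \<and>
     (\<forall>M \<rho> \<rho>'. (\<forall>x\<in>lfv M. \<rho> x = \<rho>' x) \<longrightarrow> sem M \<rho> = sem M \<rho>') \<and>
     (\<forall>M N \<rho>. beta_eq M N \<longrightarrow> sem M \<rho> = sem N \<rho>)"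

definition wf_frame :: "('w \<Rightarrow> 'w \<Rightarrow> bool) \<Rightarrow> bool" where
  "wf_frame R \<longleftrightarrow> \<not> (\<exists>f :: nat \<Rightarrow> 'w. \<forall>i. R (f i) (f (Suc i)))"

definition locally_linear :: "('w \<Rightarrow> 'w \<Rightarrow> bool) \<Rightarrow> bool" where
  "locally_linear R \<longleftrightarrow>
     (\<forall>p q. R p q \<longrightarrow> (\<exists>r. R\<^sup>*\<^sup>* p r \<and> R r q \<and> (\<forall>s. R r s \<longrightarrow> R\<^sup>*\<^sup>* q s)))"

definition hereditary :: "('w \<Rightarrow> 'w \<Rightarrow> bool) \<Rightarrow> (nat \<Rightarrow> 'w \<Rightarrow> 'v set) \<Rightarrow> bool" where
  "hereditary R \<eta> \<longleftrightarrow> (\<forall>X p q. R p q \<longrightarrow> \<eta> X p \<subseteq> \<eta> X q)"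

definition interp_eqs ::
  "('w \<Rightarrow> 'w \<Rightarrow> bool) \<Rightarrow> ('v \<Rightarrow> 'v \<Rightarrow> 'v) \<Rightarrow> (nat \<Rightarrow> 'w \<Rightarrow> 'v set)
     \<Rightarrow> ('w \<Rightarrow> ty \<Rightarrow> 'v set) \<Rightarrow> bool" where
  "interp_eqs R app \<eta> J \<longleftrightarrow>
     (\<forall>p A. type_expr A \<longrightarrow> J p A =
        (if top_variant A then UNIV else
         (case A of
            TVar X \<Rightarrow> \<eta> X p
          | Later a \<Rightarrow> {u. \<forall>q. R p q \<longrightarrow> u \<in> J q a}
          | Arr a b \<Rightarrow> {u. \<forall>q. R\<^sup>*\<^sup>* p q \<longrightarrow> (\<forall>v\<in>J q a. app u v \<in> J q b)}
          | Mu a \<Rightarrow> J p (subst_ty a 0 (Mu a))))) \<and>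
     (\<forall>p A. \<not> type_expr A \<longrightarrow> J p A = {})"

text \<open>I[A]^eta_p: the function determined (by well-founded induction on p and the rank of A)
  by the defining equations; values on non-type-expressions are fixed to be empty.\<close>
definition interp ::
  "('w \<Rightarrow> 'w \<Rightarrow> bool) \<Rightarrow> ('v \<Rightarrow> 'v \<Rightarrow> 'v) \<Rightarrow> (nat \<Rightarrow> 'w \<Rightarrow> 'v set) \<Rightarrow> 'w \<Rightarrow> ty \<Rightarrow> 'v set" where
  "interp R app \<eta> = (THE J. interp_eqs R app \<eta> J)"

end

theory Submission imports Defs begin

fun rk :: "ty \<Rightarrow> nat" where
  "rk (TVar n) = 0"
| "rk (Later a) = 0"
| "rk (Arr a b) = (if top_variant (Arr a b) then 0 else Suc (max (rk a) (rk b)))"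
| "rk (Mu a) = (if top_variant (Mu a) then 0 else Suc (rk a))"

lemma rk_top: "top_variant x \<Longrightarrow> rk x = 0"
  by (cases x) (auto simp: top_variant_def)

lemma refers_subst: "refers_to (tail a) j \<Longrightarrow> j < k \<Longrightarrow> refers_to (tail (subst_ty a k S)) j"
  by (induction a arbitrary: j k S) auto

lemma guarded_subst: "guarded_ref (tail a) j \<Longrightarrow> j < k \<Longrightarrow> guarded_ref (tail (subst_ty a k S)) j"
  by (induction a arbitrary: j k S) (auto simp: refers_subst)

lemma top_tail_subst: "top_tail (tail a) \<Longrightarrow> top_tail (tail (subst_ty a k S))"
  by (induction a arbitrary: k S) (auto simp: guarded_subst)

lemma top_variant_subst: "top_variant a \<Longrightarrow> top_variant (subst_ty a k S)"
  using top_tail_subst top_variant_def by blast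

lemma rk_subst: "proper a k \<Longrightarrow> rk (subst_ty a k S) \<le> rk a"
proof (induction a arbitrary: k S)
  case (Arr a b)
  show ?case
  proof (cases "top_variant (subst_ty (Arr a b) k S)")
    case True then show ?thesis by (simp only: rk_top)
  next
    case False
    then have nb: "\<not> top_variant (subst_ty b k S)" by (simp add: top_variant_def)
    then have nb': "\<not> top_variant b" using top_variant_subst by blast
    then have "proper a k" "proper b k" using Arr.prems by auto
    then show ?thesis using Arr.IH[of k S] nb nb' False by (auto simp: top_variant_def)
  qed
next
  case (Mu a)
  then show ?case
    using top_variant_subst[of "Mu a" k S]
    by (cases "top_variant (subst_ty (Mu a) k S)") (auto simp del: subst_ty.simps, auto)
qed auto

lemma wf_rel: "wf_frame R \<Longrightarrow> wf {(q,p). R\<^sup>+\<^sup>+ p q}"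
proof -
  assume "wf_frame R"
  then have "wf {(q,p). R p q}"
    unfolding wf_frame_def wf_iff_no_infinite_down_chain by auto
  then have "wf ({(q,p). R p q}\<^sup>+)" by (rule wf_trancl)
  moreover have "{(q,p). R p q}\<^sup>+ = {(q,p). R\<^sup>+\<^sup>+ p q}"
  proof -
    have "(x,y) \<in> {(q,p). R p q}\<^sup>+ \<longleftrightarrow> R\<^sup>+\<^sup>+ y x" for x y
    proof
      show "(x,y) \<in> {(q,p). R p q}\<^sup>+ \<Longrightarrow> R\<^sup>+\<^sup>+ y x"
        by (induction rule: trancl_induct) (auto intro: tranclp.intros tranclp_into_tranclp2)
      show "R\<^sup>+\<^sup>+ y x \<Longrightarrow> (x,y) \<in> {(q,p). R p q}\<^sup>+"
        by (induction rule: tranclp_induct) (auto intro: trancl_into_trancl2)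
    qed
    then show ?thesis by auto
  qed
  ultimately show ?thesis by simp
qed

context
  fixes R :: "'w \<Rightarrow> 'w \<Rightarrow> bool" and app :: "'v \<Rightarrow> 'v \<Rightarrow> 'v" and \<eta> :: "nat \<Rightarrow> 'w \<Rightarrow> 'v set"
  assumes wfR: "wf_frame R"
begin

function Ifn :: "'w \<Rightarrow> ty \<Rightarrow> 'v set" where
"Ifn p A = (if \<not> type_expr A then {} else if top_variant A then UNIV else (case A of
    TVar X \<Rightarrow> \<eta> X p
  | Later a \<Rightarrow> {u. \<forall>q. u \<in> (if R p q then Ifn q a else UNIV)}
  | Arr a b \<Rightarrow> {u. \<forall>q v. v \<in> (if R\<^sup>*\<^sup>* p q then Ifn q a else {}) \<longrightarrow> app u v \<in> (if R\<^sup>*\<^sup>* p q then Ifn q b else UNIV)}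
  | Mu a \<Rightarrow> Ifn p (subst_ty a 0 (Mu a))))"
  by pat_completeness auto
lemma te_mu: "type_expr (Mu a) \<Longrightarrow> proper a 0"
  by (cases rule: type_expr.cases) auto

termination
proof (relation "inv_image ({(q,p). R\<^sup>+\<^sup>+ p q} <*lex*> measure rk) (\<lambda>(p,A). (p,A))")
  show "wf (inv_image ({(q,p). R\<^sup>+\<^sup>+ p q} <*lex*> measure rk) (\<lambda>(p,A). (p,A)))"
    using wf_rel[OF wfR] by auto
qed (auto dest: rtranclpD elim: type_expr.cases simp: rk_subst te_mu le_imp_less_Suc)

declare Ifn.simps[simp del]

lemma Ifn_eqs: "interp_eqs R app \<eta> Ifn"
  unfolding interp_eqs_def
  by (intro conjI allI impI; subst Ifn.simps; auto split: ty.splits)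

lemma Ifn_uniq: "interp_eqs R app \<eta> J \<Longrightarrow> J p A = Ifn p A"
proof (induction p A rule: Ifn.induct)
  case (1 p A)
  have E: "J p A = (if type_expr A then (if top_variant A then UNIV else
         (case A of
            TVar X \<Rightarrow> \<eta> X p
          | Later a \<Rightarrow> {u. \<forall>q. R p q \<longrightarrow> u \<in> J q a}
          | Arr a b \<Rightarrow> {u. \<forall>q. R\<^sup>*\<^sup>* p q \<longrightarrow> (\<forall>v\<in>J q a. app u v \<in> J q b)}
          | Mu a \<Rightarrow> J p (subst_ty a 0 (Mu a)))) else {})"
    using "1.prems" unfolding interp_eqs_def by auto
  show ?case
  proof (cases "type_expr A \<and> \<not> top_variant A")
    case False then show ?thesis using E by (subst Ifn.simps) auto
  next
    case True
    then show ?thesis using E "1.IH" "1.prems"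
      by (subst Ifn.simps) (cases A; auto)
  qed
qed

lemma interp_Ifn: "interp R app \<eta> = Ifn"
  unfolding interp_def
  by (rule the_equality) (rule Ifn_eqs, auto intro!: ext simp: Ifn_uniq)

lemma Ifn_her: "hereditary R \<eta> \<Longrightarrow> R p q \<Longrightarrow> Ifn p A \<subseteq> Ifn q A"
proof (induction p A arbitrary: q rule: Ifn.induct)
  case (1 p A)
  show ?case
  proof (cases "type_expr A \<and> \<not> top_variant A")
    case False then show ?thesis by (subst (1 2) Ifn.simps) auto
  next
    case True
    show ?thesis
    proof (cases A)
      case (TVar X) then show ?thesis using True "1.prems" 
        by (subst (1 2) Ifn.simps) (auto simp: hereditary_def)
    next
      case (Arr a b) then show ?thesis using True "1.prems"
        by (subst (1 2) Ifn.simps) (auto intro: converse_rtranclp_into_rtranclp)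
    next
      case (Later a)
      show ?thesis
      proof
        fix u assume "u \<in> Ifn p A"
        then have u: "\<And>r. R p r \<Longrightarrow> u \<in> Ifn r a" using True Later
          by (subst (asm) Ifn.simps) (auto, metis)
        have "u \<in> Ifn s a" if "R q s" for s
          using "1.IH"(3)[OF _ _ Later "1.prems"(2) "1.prems"(1) \<open>R q s\<close>] True Later u[OF "1.prems"(2)] "1.prems"
          by auto
        then show "u \<in> Ifn q A" using True Later by (subst Ifn.simps) auto
      qed
    next
      case (Mu a) then show ?thesis using True "1.prems" "1.IH"
        by (subst (1 2) Ifn.simps) auto
    qed
  qed
qed

lemma Ifn_her_star: assumes h: "hereditary R \<eta>" shows "R\<^sup>*\<^sup>* p q \<Longrightarrow> Ifn p A \<subseteq> Ifn q A"
  by (induction rule: rtranclp_induct) (use Ifn_her[OF h] in blast)+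

lemma tv_later[simp]: "top_variant (Later a) = top_variant a"
  and tv_arr[simp]: "top_variant (Arr a b) = top_variant b"
  and tv_var[simp]: "\<not> top_variant (TVar n)"
  by (auto simp: top_variant_def)

lemma mem_if_UNIV: "(u \<in> (if P then A else UNIV)) = (P \<longrightarrow> u \<in> A)"
  and mem_if_empty: "(u \<in> (if P then A else {})) = (P \<and> u \<in> A)" by auto

lemma Ifn_top: "type_expr a \<Longrightarrow> top_variant a \<Longrightarrow> Ifn p a = UNIV"
  by (subst Ifn.simps) auto

lemma Ifn_var: "Ifn p (TVar n) = \<eta> n p"
  by (subst Ifn.simps) (auto intro: type_expr.intros)

lemma Ifn_later: "type_expr a \<Longrightarrow> \<not> top_variant a \<Longrightarrow>
   Ifn p (Later a) = {u. \<forall>q. R p q \<longrightarrow> u \<in> Ifn q a}"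
  by (subst Ifn.simps) (simp add: mem_if_UNIV type_expr.intros)

lemma Ifn_arr: "type_expr a \<Longrightarrow> type_expr b \<Longrightarrow> \<not> top_variant b \<Longrightarrow>
   Ifn p (Arr a b) = {u. \<forall>q. R\<^sup>*\<^sup>* p q \<longrightarrow> (\<forall>v\<in>Ifn q a. app u v \<in> Ifn q b)}"
  by (subst Ifn.simps) (simp add: mem_if_UNIV mem_if_empty type_expr.intros, blast)

lemma later_mem: "type_expr a \<Longrightarrow> v \<in> Ifn q (Later a) \<Longrightarrow> R q r \<Longrightarrow> v \<in> Ifn r a"
  by (cases "top_variant a") (auto simp: Ifn_top Ifn_later)

lemma later_memI: "type_expr a \<Longrightarrow> (\<And>r. R q r \<Longrightarrow> v \<in> Ifn r a) \<Longrightarrow> v \<in> Ifn q (Later a)"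
  using Ifn_top[of "Later a" q] by (cases "top_variant a") (auto simp: Ifn_later intro: type_expr.intros)

lemma L1: assumes "type_expr A" "type_expr B"
  shows "Ifn p (Later (Arr A B)) \<subseteq> Ifn p (Arr (Later A) (Later B))"
proof (cases "top_variant B")
  case True then show ?thesis using assms by (simp add: Ifn_top type_expr.intros)
next
  case False
  show ?thesis
  proof
    fix u assume "u \<in> Ifn p (Later (Arr A B))"
    then have u: "\<And>q r v. R p q \<Longrightarrow> R\<^sup>*\<^sup>* q r \<Longrightarrow> v \<in> Ifn r A \<Longrightarrow> app u v \<in> Ifn r B"
      using assms False by (simp add: Ifn_later Ifn_arr type_expr.intros)
    have "app u v \<in> Ifn q (Later B)" if "R\<^sup>*\<^sup>* p q" "v \<in> Ifn q (Later A)" for q v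
    proof (rule later_memI[OF assms(2)])
      fix r assume "R q r"
      then have "R\<^sup>+\<^sup>+ p r" using that(1) by (metis rtranclp_into_tranclp1)
      then obtain s where "R p s" "R\<^sup>*\<^sup>* s r" using tranclpD by metis
      moreover have "v \<in> Ifn r A" using later_mem[OF assms(1) that(2) \<open>R q r\<close>] .
      ultimately show "app u v \<in> Ifn r B" using u by blast
    qed
    then show "u \<in> Ifn p (Arr (Later A) (Later B))"
      using assms False by (simp add: Ifn_arr type_expr.intros)
  qed
qed

lemma L2: assumes "type_expr A" "type_expr B" "locally_linear R" "hereditary R \<eta>"
  shows "Ifn p (Arr (Later A) (Later B)) \<subseteq> Ifn p (Later (Arr A B))"
proof (cases "top_variant B")
  case True then show ?thesis using assms by (simp add: Ifn_top type_expr.intros)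
next
  case False
  show ?thesis
  proof
    fix u assume "u \<in> Ifn p (Arr (Later A) (Later B))"
    then have u: "\<And>q v. R\<^sup>*\<^sup>* p q \<Longrightarrow> v \<in> Ifn q (Later A) \<Longrightarrow> app u v \<in> Ifn q (Later B)"
      using assms False by (simp add: Ifn_arr type_expr.intros)
    have "app u v \<in> Ifn r B" if hq: "R p q" and hr: "R\<^sup>*\<^sup>* q r" and hv: "v \<in> Ifn r A" for q r v
    proof -
      obtain x where x: "R\<^sup>*\<^sup>* p x" "R x r"
        using hr
      proof (cases rule: rtranclp.cases)
        case rtrancl_refl then show ?thesis using that hq by blast
      next
        case (rtrancl_into_rtrancl y)
        then show ?thesis using that hq
          by (meson converse_rtranclp_into_rtranclp)
      qed
      then obtain z where z: "R\<^sup>*\<^sup>* x z" "R z r" "\<And>s. R z s \<Longrightarrow> R\<^sup>*\<^sup>* r s"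
        using assms(3) unfolding locally_linear_def by blast
      have "v \<in> Ifn z (Later A)"
        by (rule later_memI[OF assms(1)]) (use Ifn_her_star[OF assms(4)] z(3) hv in blast)
      moreover have "R\<^sup>*\<^sup>* p z" using x z by auto
      ultimately show ?thesis using u later_mem[OF assms(2) _ z(2)] by blast
    qed
    then show "u \<in> Ifn p (Later (Arr A B))"
      using assms False by (simp add: Ifn_later Ifn_arr type_expr.intros)
  qed
qed

end

lemma irrefl_tr: "wf_frame R \<Longrightarrow> \<not> R\<^sup>+\<^sup>+ q q"
  using wf_not_refl[OF wf_rel, of R q] by simp

theorem theorem3:
  fixes app :: "'v \<Rightarrow> 'v \<Rightarrow> 'v"
    and sem :: "lterm \<Rightarrow> (nat \<Rightarrow> 'v) \<Rightarrow> 'v"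
    and R :: "'w \<Rightarrow> 'w \<Rightarrow> bool"
  assumes "syn_lambda_algebra app sem"
    and "wf_frame R"
  shows "(\<forall>A B (\<eta> :: nat \<Rightarrow> 'w \<Rightarrow> 'v set) p. type_expr A \<longrightarrow> type_expr B \<longrightarrow> hereditary R \<eta> \<longrightarrow>
            interp R app \<eta> p (Later (Arr A B)) = interp R app \<eta> p (Arr (Later A) (Later B)))
         \<longleftrightarrow> locally_linear R"
proof
  assume H: "\<forall>A B (\<eta> :: nat \<Rightarrow> 'w \<Rightarrow> 'v set) p. type_expr A \<longrightarrow> type_expr B \<longrightarrow> hereditary R \<eta> \<longrightarrow>
            interp R app \<eta> p (Later (Arr A B)) = interp R app \<eta> p (Arr (Later A) (Later B))"
  show "locally_linear R"
  proof (rule ccontr)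
    assume "\<not> locally_linear R"
    then obtain p q where pq: "R p q"
      and nl: "\<And>r. R\<^sup>*\<^sup>* p r \<Longrightarrow> R r q \<Longrightarrow> \<exists>s. R r s \<and> \<not> R\<^sup>*\<^sup>* q s"
      unfolding locally_linear_def by blast
    define \<eta> :: "nat \<Rightarrow> 'w \<Rightarrow> 'v set" where
      "\<eta> n w = (if n = 0 then (if R\<^sup>*\<^sup>* q w then UNIV else {}) else (if R\<^sup>+\<^sup>+ q w then UNIV else {}))" for n w
    have her: "hereditary R \<eta>"
      unfolding hereditary_def \<eta>_def
      by (auto intro: rtranclp.rtrancl_into_rtrancl tranclp.trancl_into_trancl)
    have T0: "type_expr (TVar 0)" "type_expr (TVar 1)" by (auto intro: type_expr.intros)
    have "interp R app \<eta> p (Later (Arr (TVar 0) (TVar 1))) = interp R app \<eta> p (Arr (Later (TVar 0)) (Later (TVar 1)))"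
      using H her T0 by blast
    then have E: "Ifn R app \<eta> p (Later (Arr (TVar 0) (TVar 1))) = Ifn R app \<eta> p (Arr (Later (TVar 0)) (Later (TVar 1)))"
      using interp_Ifn[OF assms(2), of app \<eta>] by simp
    have irr: "\<not> R\<^sup>+\<^sup>+ q q" using irrefl_tr[OF assms(2)] .
    have TA: "type_expr (Arr (TVar 0) (TVar 1))" "type_expr (Later (TVar 0))" "type_expr (Later (TVar 1))"
      using T0 by (auto intro: type_expr.intros)
    have L: "Ifn R app \<eta> w (Later (Arr (TVar 0) (TVar 1))) = {u. \<forall>q. R w q \<longrightarrow> u \<in> Ifn R app \<eta> q (Arr (TVar 0) (TVar 1))}" for w
      by (rule Ifn_later[OF assms(2) TA(1)]) (simp add: top_variant_def)
    have A: "Ifn R app \<eta> w (Arr (TVar 0) (TVar 1)) = {u. \<forall>q. R\<^sup>*\<^sup>* w q \<longrightarrow> (\<forall>v\<in>\<eta> 0 q. app u v \<in> \<eta> 1 q)}" for w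
      using Ifn_arr[OF assms(2) T0, where p=w] by (simp add: Ifn_var[OF assms(2)] top_variant_def)
    have L0: "Ifn R app \<eta> w (Later (TVar n)) = {u. \<forall>q. R w q \<longrightarrow> u \<in> \<eta> n q}" for w n
      using Ifn_later[OF assms(2) type_expr.intros(1)[of n], where p=w] by (simp add: Ifn_var[OF assms(2)] top_variant_def)
    have A2: "Ifn R app \<eta> w (Arr (Later (TVar 0)) (Later (TVar 1))) = {u. \<forall>q. R\<^sup>*\<^sup>* w q \<longrightarrow> (\<forall>v\<in>Ifn R app \<eta> q (Later (TVar 0)). app u v \<in> Ifn R app \<eta> q (Later (TVar 1)))}" for w
      using Ifn_arr[OF assms(2) TA(2,3), where p=w] by (simp add: top_variant_def)
    have "undefined \<notin> Ifn R app \<eta> p (Later (Arr (TVar 0) (TVar 1)))"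
      using pq irr unfolding L A by (auto simp: \<eta>_def)
    moreover have "undefined \<in> Ifn R app \<eta> p (Arr (Later (TVar 0)) (Later (TVar 1)))"
    proof -
      have "R\<^sup>+\<^sup>+ q r" if "R\<^sup>*\<^sup>* p q'" "\<forall>r. R q' r \<longrightarrow> R\<^sup>*\<^sup>* q r" "R q' r" for q' r
      proof -
        have "R\<^sup>*\<^sup>* q r" using that by blast
        then have "r = q \<or> R\<^sup>+\<^sup>+ q r" by (metis rtranclpD)
        moreover have "r \<noteq> q" using nl[OF that(1)] that(2,3) by blast
        ultimately show ?thesis by blast
      qed
      then show ?thesis unfolding A2 L0 by (auto simp: \<eta>_def)
    qed
    ultimately show False using E by simp
  qed
next
  assume LL: "locally_linear R"
  show "\<forall>A B (\<eta> :: nat \<Rightarrow> 'w \<Rightarrow> 'v set) p. type_expr A \<longrightarrow> type_expr B \<longrightarrow> hereditary R \<eta> \<longrightarrow>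
            interp R app \<eta> p (Later (Arr A B)) = interp R app \<eta> p (Arr (Later A) (Later B))"
    using L1[OF assms(2)] L2[OF assms(2) _ _ LL] interp_Ifn[OF assms(2)]
    by (metis subset_antisym)
qed

end
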